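(* Let $u,v:\mathbb{C}\to\mathbb{R}$ be harmonic, $f=u+iv$, $\mathcal{R}_f=f(\mathbb{C})$, and suppose $\mathcal{D}(\mathcal{R}_f)$ contains no pair of antipodal points. Then there exist $\xi\in\partial\mathbb{D}$, $0<\phi<\pi/2$ and $\rho>0$ such that $$\mathcal{R}_f\subset\overline{D}(0,\rho)\cup\big(\mathbb{C}\setminus(\mathcal{C}_{i\xi,\phi}\cup\mathcal{C}^+_{\xi,\phi})\big).$$
   Context: $\partial\mathbb{D}$ is the unit circle; $\overline{D}(0,\rho)$ the closed disc of radius $\rho$ centered at $0$. For a set $\mathcal{R}\subset\mathbb{C}$, $e^{i\theta}\in\partial\mathbb{D}$ is an asymptotic direction of $\mathcal{R}$ if there exist $w_n\in\mathcal{R}$ and $\varepsilon_n>0$, $\varepsilon_n\to0$, with $\varepsilon_n w_n\to e^{i\theta}$; $\mathcal{D}(\mathcal{R})$ is the set of asymptotic directions. For $\xi=e^{i\beta}\in\partial\mathbb{D}$ and $0<\phi<\pi/2$: $\mathcal{C}_{\xi,\phi}=\{te^{i\theta}: t\in\mathbb{R},\ |\theta-\beta|\le\phi\}$ (whole cone) and $\mathcal{C}^+_{\xi,\phi}=\{te^{i\theta}: t\ge0,\ |\theta-\beta|\le\phi\}$ (half cone). *)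

theory Defs
  imports "HOL-Analysis.Analysis"
begin

definition harmonic :: "(complex \<Rightarrow> real) \<Rightarrow> bool" where
  "harmonic u \<longleftrightarrow>
     (\<exists>p q pxx pxy qx qy.
        (\<forall>z. (u has_derivative (\<lambda>h. Re h * p z + Im h * q z)) (at z)) \<and>
        (\<forall>z. (p has_derivative (\<lambda>h. Re h * pxx z + Im h * pxy z)) (at z)) \<and>
        (\<forall>z. (q has_derivative (\<lambda>h. Re h * qx z + Im h * qy z)) (at z)) \<and>
        continuous_on UNIV pxx \<and> continuous_on UNIV pxy \<and>
        continuous_on UNIV qx \<and> continuous_on UNIV qy \<and>
        (\<forall>z. pxx z + qy z = 0))"

definition asymp_dirs :: "complex set \<Rightarrow> complex set" where
  "asymp_dirs R = {e. e \<in> sphere 0 1 \<and>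
     (\<exists>w :: nat \<Rightarrow> complex. \<exists>\<epsilon> :: nat \<Rightarrow> real.
        (\<forall>n. w n \<in> R \<and> \<epsilon> n > 0) \<and> \<epsilon> \<longlonglongrightarrow> 0 \<and>
        (\<lambda>n. of_real (\<epsilon> n) * w n) \<longlonglongrightarrow> e)}"

definition cone_whole :: "complex \<Rightarrow> real \<Rightarrow> complex set" where
  "cone_whole \<xi> \<phi> = {of_real t * exp (\<i> * of_real \<theta>) | t \<theta>.
      \<exists>\<beta>. \<xi> = exp (\<i> * of_real \<beta>) \<and> \<bar>\<theta> - \<beta>\<bar> \<le> \<phi>}"

definition cone_half :: "complex \<Rightarrow> real \<Rightarrow> complex set" where
  "cone_half \<xi> \<phi> = {of_real t * exp (\<i> * of_real \<theta>) | t \<theta>.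
      t \<ge> 0 \<and> (\<exists>\<beta>. \<xi> = exp (\<i> * of_real \<beta>) \<and> \<bar>\<theta> - \<beta>\<bar> \<le> \<phi>)}"

end

theory Submission
  imports Defs
begin

lemma expdist: "cmod (exp (\<i> * of_real a) - exp (\<i> * of_real b)) \<le> \<bar>a - b\<bar>"
proof -
  have 1: "cmod (exp (\<i> * of_real a) - exp (\<i> * of_real b)) ^ 2 = 2 - 2 * cos (a - b)"
    unfolding cmod_power2 apply (simp add: Re_exp Im_exp cos_diff)
    by (smt (verit, best) distrib_right power2_diff sin_cos_squared_add2)
  have 2: "2 - 2 * cos (a - b) = 4 * (sin ((a-b)/2))^2"
  proof -
    have h: "2 * ((a-b)/2) = a - b" by simp
    show ?thesis using cos_double_sin[of "(a-b)/2"] unfolding h by simp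
  qed
  have 3: "\<bar>sin ((a-b)/2)\<bar> \<le> \<bar>(a-b)/2\<bar>" by (rule abs_sin_x_le_abs_x)
  have "cmod (exp (\<i> * of_real a) - exp (\<i> * of_real b)) ^ 2 \<le> \<bar>a - b\<bar> ^ 2"
    unfolding 1 2 using power_mono[OF 3, of 2] by (simp add: power_divide)
  then show ?thesis by (rule power2_le_imp_le) simp
qed

lemma sgn_pos: "t > 0 \<Longrightarrow> sgn (of_real t * exp (\<i> * of_real \<theta>)) = exp (\<i> * of_real \<theta>)"
  by (simp add: sgn_div_norm norm_mult scaleR_conv_of_real)

lemma sgn_neg: "t < 0 \<Longrightarrow> sgn (of_real t * exp (\<i> * of_real \<theta>)) = - exp (\<i> * of_real \<theta>)"
  by (simp add: sgn_div_norm norm_mult scaleR_conv_of_real)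

definition Ds :: "complex set \<Rightarrow> complex set" where
  "Ds R = sphere 0 1 \<inter> (\<Inter>M::real. closure (sgn ` {w\<in>R. norm w > M}))"

lemma closed_Ds: "closed (Ds R)"
  unfolding Ds_def by (intro closed_Int closed_sphere closed_Inter) auto

lemma Ds_sub: "Ds R \<subseteq> asymp_dirs R"
proof
  fix e assume e: "e \<in> Ds R"
  have e1: "e \<in> sphere 0 1" using e by (simp add: Ds_def)
  have "\<forall>n::nat. \<exists>w. w \<in> R \<and> norm w > real n + 1 \<and> dist (sgn w) e < 1 / (real n + 1)"
  proof
    fix n :: nat
    have "e \<in> closure (sgn ` {w\<in>R. norm w > real n + 1})" using e by (auto simp: Ds_def)
    moreover have "(1::real) / (real n + 1) > 0" by simp
    ultimately obtain y where y: "y \<in> sgn ` {w\<in>R. norm w > real n + 1}" "dist y e < 1 / (real n + 1)"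
      unfolding closure_approachable by blast
    from y(1) obtain w where "w \<in> R" "norm w > real n + 1" "y = sgn w" by blast
    then show "\<exists>w. w \<in> R \<and> norm w > real n + 1 \<and> dist (sgn w) e < 1 / (real n + 1)"
      using y(2) by blast
  qed
  then have "\<exists>w. \<forall>n. w n \<in> R \<and> norm (w n) > real n + 1 \<and> dist (sgn (w n)) e < 1 / (real n + 1)"
    by (rule choice)
  then obtain w where w0: "\<forall>n. w n \<in> R \<and> norm (w n) > real n + 1 \<and> dist (sgn (w n)) e < 1 / (real n + 1)"
    by blast
  have w: "\<And>n. w n \<in> R" "\<And>n. norm (w n) > real n + 1"
    "\<And>n. dist (sgn (w n)) e < 1 / (real n + 1)" using w0 by simp_all
  define \<epsilon> where "\<epsilon> n = 1 / norm (w n)" for n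
  have wpos: "norm (w n) > 0" for n
  proof -
    have "(0::real) \<le> real n" by simp
    then show ?thesis using w(2)[of n] by linarith
  qed
  have epos: "\<epsilon> n > 0" for n using wpos[of n] by (simp add: \<epsilon>_def)
  have lim1: "(\<lambda>n. 1 / (real n + 1)) \<longlonglongrightarrow> 0"
    using LIMSEQ_inverse_real_of_nat by (simp add: inverse_eq_divide add.commute)
  have "\<epsilon> \<longlonglongrightarrow> 0"
  proof (rule real_tendsto_sandwich[OF _ _ tendsto_const lim1])
    show "\<forall>\<^sub>F n in sequentially. 0 \<le> \<epsilon> n" using epos by (intro always_eventually) (simp add: less_imp_le)
    have "\<epsilon> n \<le> 1 / (real n + 1)" for n
    proof -
      have "0 < real n + 1" by simp
      then show ?thesis using w(2)[of n] unfolding \<epsilon>_def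
        by (intro divide_left_mono) (auto intro!: mult_pos_pos)
    qed
    then show "\<forall>\<^sub>F n in sequentially. \<epsilon> n \<le> 1 / (real n + 1)"
      by (intro always_eventually) blast
  qed
  moreover have "(\<lambda>n. of_real (\<epsilon> n) * w n) \<longlonglongrightarrow> e"
  proof -
    have eq: "of_real (\<epsilon> n) * w n = sgn (w n)" for n
      by (simp add: \<epsilon>_def sgn_div_norm scaleR_conv_of_real divide_inverse)
    have "(\<lambda>n. dist (sgn (w n)) e) \<longlonglongrightarrow> 0"
    proof (rule real_tendsto_sandwich[OF _ _ tendsto_const lim1])
      show "\<forall>\<^sub>F n in sequentially. 0 \<le> dist (sgn (w n)) e" by simp
      show "\<forall>\<^sub>F n in sequentially. dist (sgn (w n)) e \<le> 1 / (real n + 1)"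
        using w(3) by (intro always_eventually allI less_imp_le) blast
    qed
    then show ?thesis unfolding eq by (rule tendsto_dist_iff[THEN iffD2])
  qed
  ultimately have "(\<forall>n. w n \<in> R \<and> \<epsilon> n > 0) \<and> \<epsilon> \<longlonglongrightarrow> 0 \<and>
        (\<lambda>n. of_real (\<epsilon> n) * w n) \<longlonglongrightarrow> e" using w(1) epos by simp
  then show "e \<in> asymp_dirs R" unfolding asymp_dirs_def mem_Collect_eq
    using e1 by blast
qed

lemma notDs:
  assumes "e \<in> sphere 0 1" "e \<notin> Ds R"
  shows "\<exists>\<eta>>0. \<exists>M. \<forall>w\<in>R. norm w > M \<longrightarrow> dist (sgn w) e \<ge> \<eta>"
proof -
  obtain M where "e \<notin> closure (sgn ` {w\<in>R. norm w > M})" using assms by (auto simp: Ds_def)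
  then obtain \<eta> where eta: "\<eta> > 0" "\<forall>y\<in>sgn ` {w\<in>R. norm w > M}. \<not> dist y e < \<eta>"
    unfolding closure_approachable by blast
  have "\<eta> \<le> dist (sgn w) e" if "w \<in> R" "M < norm w" for w
  proof -
    have "sgn w \<in> sgn ` {w\<in>R. norm w > M}" using that by blast
    then have "\<not> dist (sgn w) e < \<eta>" using eta(2) by blast
    then show ?thesis by simp
  qed
  then show ?thesis using eta(1) by blast
qed

lemma topo:
  assumes "closed D" "D \<subseteq> sphere 0 (1::real)" "\<And>e. \<not> (e \<in> D \<and> - e \<in> D)"
  shows "\<exists>\<zeta>::complex. \<zeta> \<in> sphere 0 1 \<and> \<zeta> \<notin> D \<and> - \<zeta> \<notin> D \<and> - \<i> * \<zeta> \<notin> D"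
proof -
  have "\<exists>\<zeta>::complex. \<zeta> \<in> sphere 0 1 \<and> \<zeta> \<notin> D \<and> - \<zeta> \<notin> D"
  proof (cases "D = {}")
    case True then show ?thesis by (intro exI[of _ 1]) auto
  next
    case False
    have conn: "connected (sphere (0::complex) 1)" by (rule connected_sphere) simp
    have cl: "closed (uminus ` D)" using assms(1) by (rule closed_negations)
    show ?thesis
    proof (rule ccontr)
      assume nt: "\<not> ?thesis"
      then have "sphere 0 1 \<subseteq> D \<union> uminus ` D"
      proof (intro subsetI)
        fix x :: complex assume x: "x \<in> sphere 0 1"
        have "- x \<in> D \<Longrightarrow> x \<in> uminus ` D" by (metis image_eqI minus_minus)
        then show "x \<in> D \<union> uminus ` D" using nt x by blast
      qed
      moreover have "D \<inter> uminus ` D \<inter> sphere 0 1 = {}"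
      proof -
        have "x \<notin> uminus ` D" if "x \<in> D" for x
        proof
          assume "x \<in> uminus ` D"
          then obtain y where "y \<in> D" "x = - y" by blast
          then show False using assms(3)[of y] that by simp
        qed
        then show ?thesis by blast
      qed
      moreover have "D \<inter> sphere 0 1 \<noteq> {}" using False assms(2) by auto
      moreover have "uminus ` D \<inter> sphere 0 1 \<noteq> {}"
      proof -
        obtain x where x: "x \<in> D" using False by blast
        then have "- x \<in> uminus ` D \<inter> sphere 0 1" using assms(2) by auto
        then show ?thesis by blast
      qed
      ultimately show False using conn assms(1) cl unfolding connected_closed by blast
    qed
  qed
  then obtain \<zeta> :: complex where z: "\<zeta> \<in> sphere 0 1" "\<zeta> \<notin> D" "- \<zeta> \<notin> D" by blast
  show ?thesis
  proof (cases "- \<i> * \<zeta> \<in> D")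
    case True
    then have "\<i> * \<zeta> \<notin> D" using assms(3)[of "- \<i> * \<zeta>"] by simp
    have "- \<zeta> \<in> sphere 0 1" using z(1) by simp
    moreover have "- (- \<zeta>) \<notin> D" using z(2) by simp
    moreover have "- \<i> * (- \<zeta>) \<notin> D" using \<open>\<i> * \<zeta> \<notin> D\<close> by simp
    ultimately show ?thesis using z(3) by blast
  next
    case False then show ?thesis using z by blast
  qed
qed

theorem lemma2:
  fixes u v :: "complex \<Rightarrow> real" and f :: "complex \<Rightarrow> complex"
  assumes "harmonic u" and "harmonic v"
    and "\<And>z. f z = of_real (u z) + \<i> * of_real (v z)"
    and "\<not> (\<exists>e. e \<in> asymp_dirs (range f) \<and> - e \<in> asymp_dirs (range f))"
  shows "\<exists>\<xi> \<phi> \<rho>. \<xi> \<in> sphere 0 1 \<and> 0 < \<phi> \<and> \<phi> < pi / 2 \<and> \<rho> > 0 \<and>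
           range f \<subseteq> cball 0 \<rho> \<union> (UNIV - (cone_whole (\<i> * \<xi>) \<phi> \<union> cone_half \<xi> \<phi>))"
proof -
  let ?R = "range f"
  have "\<exists>\<zeta>::complex. \<zeta> \<in> sphere 0 1 \<and> \<zeta> \<notin> Ds ?R \<and> - \<zeta> \<notin> Ds ?R \<and> - \<i> * \<zeta> \<notin> Ds ?R"
  proof (rule topo[OF closed_Ds])
    show "Ds ?R \<subseteq> sphere 0 1" by (auto simp: Ds_def)
    show "\<not> (e \<in> Ds ?R \<and> - e \<in> Ds ?R)" for e using Ds_sub[of ?R] assms(4) by blast
  qed
  then obtain \<zeta> :: complex where z: "\<zeta> \<in> sphere 0 1" "\<zeta> \<notin> Ds ?R" "- \<zeta> \<notin> Ds ?R"
    "- \<i> * \<zeta> \<notin> Ds ?R" by blast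
  define \<xi> where "\<xi> = - \<i> * \<zeta>"
  have xi1: "\<xi> \<in> sphere 0 1" using z(1) by (simp add: \<xi>_def norm_mult)
  have iz: "\<i> * \<xi> = \<zeta>" by (simp add: \<xi>_def)
  obtain \<eta>1 M1 where e1: "\<eta>1 > 0" "\<forall>w\<in>?R. norm w > M1 \<longrightarrow> dist (sgn w) \<zeta> \<ge> \<eta>1"
    using notDs[OF z(1) z(2)] by blast
  obtain \<eta>2 M2 where e2: "\<eta>2 > 0" "\<forall>w\<in>?R. norm w > M2 \<longrightarrow> dist (sgn w) (- \<zeta>) \<ge> \<eta>2"
    using notDs[OF _ z(3)] z(1) by (metis mem_sphere_0 norm_minus_cancel)
  obtain \<eta>3 M3 where e3: "\<eta>3 > 0" "\<forall>w\<in>?R. norm w > M3 \<longrightarrow> dist (sgn w) \<xi> \<ge> \<eta>3"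
    using notDs[OF xi1 z(4)[folded \<xi>_def]] by blast
  define \<phi> where "\<phi> = min (min \<eta>1 \<eta>2) (min \<eta>3 1) / 2"
  define \<rho> where "\<rho> = max (max M1 M2) (max M3 1)"
  have phi: "0 < \<phi>" "\<phi> < \<eta>1" "\<phi> < \<eta>2" "\<phi> < \<eta>3" "\<phi> < pi / 2"
    using e1(1) e2(1) e3(1) pi_gt3 by (auto simp: \<phi>_def)
  have main: "w \<in> cball 0 \<rho> \<union> (UNIV - (cone_whole (\<i> * \<xi>) \<phi> \<union> cone_half \<xi> \<phi>))" if w: "w \<in> ?R" for w
  proof (cases "norm w \<le> \<rho>")
    case True then show ?thesis by simp
  next
    case False
    then have big: "norm w > M1" "norm w > M2" "norm w > M3" "w \<noteq> 0"
      by (auto simp: \<rho>_def)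
    have "dist (sgn w) \<zeta> \<ge> \<eta>1" using e1(2) w big(1) by blast
    then have d1: "dist (sgn w) \<zeta> > \<phi>" using phi(2) by linarith
    have "dist (sgn w) (- \<zeta>) \<ge> \<eta>2" using e2(2) w big(2) by blast
    then have d2: "dist (sgn w) (- \<zeta>) > \<phi>" using phi(3) by linarith
    have "dist (sgn w) \<xi> \<ge> \<eta>3" using e3(2) w big(3) by blast
    then have d3: "dist (sgn w) \<xi> > \<phi>" using phi(4) by linarith
    have "w \<notin> cone_whole \<zeta> \<phi>"
    proof
      assume "w \<in> cone_whole \<zeta> \<phi>"
      then obtain t \<theta> \<beta> where tb: "w = of_real t * exp (\<i> * of_real \<theta>)"
        "\<zeta> = exp (\<i> * of_real \<beta>)" "\<bar>\<theta> - \<beta>\<bar> \<le> \<phi>" unfolding cone_whole_def by blast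
      have ed: "cmod (exp (\<i> * of_real \<theta>) - exp (\<i> * of_real \<beta>)) \<le> \<phi>"
        using expdist[of \<theta> \<beta>] tb(3) by linarith
      have "t \<noteq> 0" using big(4) tb(1) by auto
      then consider "t > 0" | "t < 0" by linarith
      then show False
      proof cases
        case 1
        then show False using d1 ed tb by (simp add: sgn_pos dist_norm)
      next
        case 2
        have "dist (sgn w) (- \<zeta>) = cmod (exp (\<i> * of_real \<theta>) - exp (\<i> * of_real \<beta>))"
          using 2 tb by (simp add: sgn_neg dist_norm norm_minus_commute)
        then show False using d2 ed by simp
      qed
    qed
    moreover have "w \<notin> cone_half \<xi> \<phi>"
    proof
      assume "w \<in> cone_half \<xi> \<phi>"
      then obtain t \<theta> \<beta> where tb: "w = of_real t * exp (\<i> * of_real \<theta>)" "t \<ge> 0"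
        "\<xi> = exp (\<i> * of_real \<beta>)" "\<bar>\<theta> - \<beta>\<bar> \<le> \<phi>" unfolding cone_half_def by blast
      have ed: "cmod (exp (\<i> * of_real \<theta>) - exp (\<i> * of_real \<beta>)) \<le> \<phi>"
        using expdist[of \<theta> \<beta>] tb(4) by linarith
      have "t > 0" using big(4) tb(1,2) by (cases "t = 0") auto
      then show False using d3 ed tb by (simp add: sgn_pos dist_norm)
    qed
    ultimately show ?thesis using iz by simp
  qed
  have sub: "?R \<subseteq> cball 0 \<rho> \<union> (UNIV - (cone_whole (\<i> * \<xi>) \<phi> \<union> cone_half \<xi> \<phi>))"
    by (rule subsetI) (rule main)
  have rpos: "\<rho> > 0" by (simp add: \<rho>_def)
  show ?thesis
    by (rule exI[of _ \<xi>], rule exI[of _ \<phi>], rule exI[of _ \<rho>]) (simp only: xi1 phi(1) phi(5) rpos sub simp_thms)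
qed

end
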